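(* Let $\mathcal{D}_R$ be the class of all finite reflexive digraphs and let $D\in\mathcal{D}_R$. The class $\mathrm{Av}(D)=\{E\in\mathcal{D}_R: D\not\preceq E\}$, with respect to the strong homomorphic image ordering $\preceq$, is well quasi-ordered if and only if $D$ is isomorphic to the complete digraph $\overrightarrow{K}_n$ for some $n\ge1$.
   Context: A digraph is a set $D$ with a binary relation $E(D)\subseteq D\times D$; reflexive means every loop $(x,x)$ is an edge. $\overrightarrow{K}_n$ is the digraph on $\{1,\dots,n\}$ with edge set $\{(i,j):1\le i,j\le n\}$. A homomorphism maps edges to edges; it is strong if additionally every edge of the target between vertices of the image is the image of an edge. Strong homomorphic image ordering: $A\preceq B$ iff there is a surjective strong homomorphism $B\to A$. Well quasi-ordered means no infinite strictly decreasing sequence and no infinite antichain; digraphs considered up to isomorphism. *)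

theory Defs
  imports Main
begin

type_synonym 'a digraph = "'a set \<times> ('a \<times> 'a) set"

definition verts :: "'a digraph \<Rightarrow> 'a set" where "verts D = fst D"
definition arcs :: "'a digraph \<Rightarrow> ('a \<times> 'a) set" where "arcs D = snd D"

definition is_digraph :: "'a digraph \<Rightarrow> bool" where
  "is_digraph D \<longleftrightarrow> arcs D \<subseteq> verts D \<times> verts D"

definition fin_refl_digraph :: "'a digraph \<Rightarrow> bool" where
  "fin_refl_digraph D \<longleftrightarrow> is_digraph D \<and> finite (verts D) \<and> (\<forall>x\<in>verts D. (x, x) \<in> arcs D)"

definition strong_hom :: "('a \<Rightarrow> 'b) \<Rightarrow> 'a digraph \<Rightarrow> 'b digraph \<Rightarrow> bool" where
  "strong_hom f A B \<longleftrightarrow>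
     f ` verts A \<subseteq> verts B \<and>
     (\<forall>x y. (x, y) \<in> arcs A \<longrightarrow> (f x, f y) \<in> arcs B) \<and>
     (\<forall>u\<in>f ` verts A. \<forall>v\<in>f ` verts A. (u, v) \<in> arcs B \<longrightarrow>
        (\<exists>x y. (x, y) \<in> arcs A \<and> f x = u \<and> f y = v))"

definition shi_le :: "'a digraph \<Rightarrow> 'b digraph \<Rightarrow> bool" where
  "shi_le A B \<longleftrightarrow> (\<exists>f. strong_hom f B A \<and> f ` verts B = verts A)"

definition digraph_iso :: "'a digraph \<Rightarrow> 'b digraph \<Rightarrow> bool" where
  "digraph_iso A B \<longleftrightarrow> (\<exists>f. bij_betw f (verts A) (verts B) \<and>
     (\<forall>x\<in>verts A. \<forall>y\<in>verts A. (x, y) \<in> arcs A \<longleftrightarrow> (f x, f y) \<in> arcs B))"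

definition complete_digraph :: "nat \<Rightarrow> nat digraph" where
  "complete_digraph n = ({1..n}, {1..n} \<times> {1..n})"

text \<open>Finite reflexive digraphs up to isomorphism are represented by those with vertex set a
  (finite) subset of nat. Av(D) is the class of such E with not D \<preceq> E.\<close>
definition Av :: "'a digraph \<Rightarrow> nat digraph set" where
  "Av D = {E. fin_refl_digraph E \<and> \<not> shi_le D E}"

text \<open>Well quasi-order as in the paper: no infinite strictly decreasing sequence and no infinite
  antichain (pairwise incomparable members, which are then pairwise non-isomorphic).\<close>
definition wqo_shi :: "nat digraph set \<Rightarrow> bool" where
  "wqo_shi C \<longleftrightarrow>
     \<not> (\<exists>s :: nat \<Rightarrow> nat digraph. (\<forall>i. s i \<in> C) \<and> (\<forall>i. shi_le (s (Suc i)) (s i) \<and> \<not> shi_le (s i) (s (Suc i)))) \<and>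
     \<not> (\<exists>s :: nat \<Rightarrow> nat digraph. (\<forall>i. s i \<in> C) \<and> (\<forall>i j. i \<noteq> j \<longrightarrow> \<not> shi_le (s i) (s j)))"

end

theory Submission
  imports Defs "HOL-Library.Infinite_Set" Complex_Main
begin


definition nx :: "nat \<Rightarrow> nat \<Rightarrow> nat" where
  "nx b i = (if Suc i = b then 0 else Suc i)"

definition Etour :: "nat \<Rightarrow> nat digraph" where
  "Etour b = ({..<b}, {(i,j). i<b \<and> j<b \<and> j \<noteq> nx b i})"

definition Gsym :: "nat \<Rightarrow> nat digraph" where
  "Gsym b = ({..<b}, {(i,j). i<b \<and> j<b \<and> j \<noteq> nx b i \<and> i \<noteq> nx b j})"

lemma Etour_frd: "b \<ge> 2 \<Longrightarrow> fin_refl_digraph (Etour b)"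
  unfolding fin_refl_digraph_def is_digraph_def verts_def arcs_def Etour_def nx_def by auto

lemma Gsym_frd: "b \<ge> 2 \<Longrightarrow> fin_refl_digraph (Gsym b)"
  unfolding fin_refl_digraph_def is_digraph_def verts_def arcs_def Gsym_def nx_def by auto

lemma shi_card:
  assumes "shi_le A B" "finite (verts B)"
  shows "card (verts A) \<le> card (verts B)"
  using assms unfolding shi_le_def by (metis card_image_le)

lemma Etour_anti:
  assumes "shi_le (Etour a) (Etour b)"
  shows "a = b"
proof -
  obtain f where sh: "strong_hom f (Etour b) (Etour a)" and su: "f ` {..<b} = {..<a}"
    using assms unfolding shi_le_def Etour_def verts_def by auto
  have hom: "\<And>x y. x<b \<Longrightarrow> y<b \<Longrightarrow> y \<noteq> nx b x \<Longrightarrow> f y \<noteq> nx a (f x)"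
    using sh unfolding strong_hom_def Etour_def arcs_def by auto
  have "inj_on f {..<b}"
  proof (rule inj_onI)
    fix y1 y2 assume y: "y1 \<in> {..<b}" "y2 \<in> {..<b}" "f y1 = f y2"
    define v where "v = f y1"
    have va: "v < a" using su y v_def by auto
    define u where "u = (if v = 0 then a - 1 else v - 1)"
    have ua: "u < a" and nu: "nx a u = v" using va unfolding u_def nx_def by auto
    obtain x where x: "x < b" "f x = u" using su ua by (metis imageE lessThan_iff)
    have "y1 = nx b x" using hom[of x y1] x y nu v_def by auto
    moreover have "y2 = nx b x" using hom[of x y2] x y nu v_def by auto
    ultimately show "y1 = y2" by simp
  qed
  hence "card {..<b} \<le> card {..<a}" using card_inj_on_le[of f "{..<b}" "{..<a}"] su by auto
  moreover have "card {..<a} \<le> card {..<b}" using su by (metis card_image_le finite_lessThan)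
  ultimately show ?thesis by simp
qed

lemma Gsym_anti:
  assumes "shi_le (Gsym a) (Gsym b)" "a \<ge> 3" "b \<ge> 5"
  shows "a = b"
proof -
  obtain f where sh: "strong_hom f (Gsym b) (Gsym a)" and su: "f ` {..<b} = {..<a}"
    using assms unfolding shi_le_def Gsym_def verts_def by auto
  have hom: "\<And>x y. x<b \<Longrightarrow> y<b \<Longrightarrow> y \<noteq> nx b x \<Longrightarrow> x \<noteq> nx b y \<Longrightarrow> f y \<noteq> nx a (f x)"
    using sh unfolding strong_hom_def Gsym_def arcs_def by auto
  have "inj_on f {..<b}"
  proof (rule inj_onI)
    fix y1 y2 assume y: "y1 \<in> {..<b}" "y2 \<in> {..<b}" "f y1 = f y2"
    show "y1 = y2"
    proof (rule ccontr)
      assume ne: "y1 \<noteq> y2"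
      define v where "v = f y1"
      have va: "v < a" using su y v_def by auto
      define u where "u = (if v = 0 then a - 1 else v - 1)"
      define w where "w = nx a v"
      have ua: "u < a" and nu: "nx a u = v" and wa: "w < a" and uw: "u \<noteq> w"
        using va assms(2) unfolding u_def w_def nx_def by auto
      obtain x where x: "x < b" "f x = u" using su ua by (metis imageE lessThan_iff)
      obtain z where z: "z < b" "f z = w" using su wa by (metis imageE lessThan_iff)
      have xz: "x \<noteq> z" using x z uw by auto
      have 1: "y1 = nx b x \<or> x = nx b y1" using hom[of x y1] x y nu v_def by auto
      have 2: "y2 = nx b x \<or> x = nx b y2" using hom[of x y2] x y nu v_def by auto
      have 3: "z = nx b y1 \<or> y1 = nx b z" using hom[of y1 z] z y w_def v_def by auto
      have 4: "z = nx b y2 \<or> y2 = nx b z" using hom[of y2 z] z y w_def v_def by auto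
      show False using 1 2 3 4 ne xz x z y assms(3) unfolding nx_def by (auto split: if_splits)
    qed
  qed
  hence "card {..<b} \<le> card {..<a}" using card_inj_on_le[of f "{..<b}" "{..<a}"] su by auto
  moreover have "card {..<a} \<le> card {..<b}" using su by (metis card_image_le finite_lessThan)
  ultimately show ?thesis by simp
qed



lemma complete_iso:
  assumes "fin_refl_digraph D" "verts D \<noteq> {}" "\<forall>x\<in>verts D. \<forall>y\<in>verts D. (x,y)\<in>arcs D"
  shows "\<exists>n\<ge>1. digraph_iso D (complete_digraph n)"
proof -
  have fin: "finite (verts D)" using assms(1) unfolding fin_refl_digraph_def by auto
  obtain h where h: "bij_betw h {1..card (verts D)} (verts D)" using ex_bij_betw_nat_finite_1[OF fin] by auto
  have b: "bij_betw (inv_into {1..card (verts D)} h) (verts D) {1..card (verts D)}"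
    using h by (rule bij_betw_inv_into)
  have "card (verts D) \<ge> 1" using fin assms(2) by (simp add: Suc_leI card_gt_0_iff)
  moreover have "digraph_iso D (complete_digraph (card (verts D)))"
    unfolding digraph_iso_def complete_digraph_def verts_def[of "({1..card (verts D)}, _)"] arcs_def[of "({1..card (verts D)}, _)"]
    apply (rule exI[of _ "inv_into {1..card (verts D)} h"])
    using b assms(3) bij_betwE by fastforce
  ultimately show ?thesis by blast
qed

lemma not_wqo:
  assumes D: "fin_refl_digraph D" and nc: "\<not> (\<exists>n\<ge>1. digraph_iso D (complete_digraph n))"
  shows "\<not> wqo_shi (Av D)"
proof -
  have refl: "\<And>x. x \<in> verts D \<Longrightarrow> (x,x) \<in> arcs D" using D unfolding fin_refl_digraph_def by auto
  have "verts D = {} \<or> (\<exists>x\<in>verts D. \<exists>y\<in>verts D. (x,y) \<notin> arcs D)"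
    using complete_iso[OF D] nc by blast
  hence cases: "verts D = {} \<or> (\<exists>x\<in>verts D. \<exists>y\<in>verts D. (x,y) \<notin> arcs D \<and> (y,x) \<notin> arcs D)
     \<or> (\<exists>x\<in>verts D. \<exists>y\<in>verts D. (x,y) \<notin> arcs D \<and> (y,x) \<in> arcs D)" by blast
  show ?thesis
  proof (cases "verts D = {} \<or> (\<exists>x\<in>verts D. \<exists>y\<in>verts D. (x,y) \<notin> arcs D \<and> (y,x) \<notin> arcs D)")
    case True
    have av: "Etour (i+5) \<in> Av D" for i
    proof -
      have "\<not> shi_le D (Etour (i+5))"
      proof
        assume "shi_le D (Etour (i+5))"
        then obtain f where sh: "strong_hom f (Etour (i+5)) D" and su: "f ` {..<i+5} = verts D"
          unfolding shi_le_def Etour_def verts_def[of "({..<i+5},_)"] by auto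
        show False using True
        proof
          assume "verts D = {}" hence "{..<i+5} = ({}::nat set)" using su by auto thus False by (metis lessThan_iff empty_iff le_add2 less_le_trans zero_less_numeral)
        next
          assume "\<exists>x\<in>verts D. \<exists>y\<in>verts D. (x,y) \<notin> arcs D \<and> (y,x) \<notin> arcs D"
          then obtain x y where xy: "x\<in>verts D" "y\<in>verts D" "(x,y) \<notin> arcs D" "(y,x) \<notin> arcs D" by blast
          obtain p where p: "p < i+5" "f p = x" using su xy by (metis imageE lessThan_iff)
          obtain q where q: "q < i+5" "f q = y" using su xy by (metis imageE lessThan_iff)
          have "p \<noteq> q" using p q xy refl by auto
          hence "(p,q) \<in> arcs (Etour (i+5)) \<or> (q,p) \<in> arcs (Etour (i+5))"
            using p q unfolding Etour_def arcs_def nx_def by auto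
          thus False using sh p q xy unfolding strong_hom_def by auto
        qed
      qed
      thus ?thesis unfolding Av_def using Etour_frd[of "i+5"] by auto
    qed
    show ?thesis unfolding wqo_shi_def
      apply (rule notI, elim conjE, erule notE[where P="\<exists>s. _ s"])
      apply (rule exI[of _ "\<lambda>i. Etour (i+5)"])
      using av Etour_anti by fastforce
  next
    case False
    then obtain x y where xy: "x\<in>verts D" "y\<in>verts D" "(x,y) \<notin> arcs D" "(y,x) \<in> arcs D" using cases by blast
    have av: "Gsym (i+5) \<in> Av D" for i
    proof -
      have "\<not> shi_le D (Gsym (i+5))"
      proof
        assume "shi_le D (Gsym (i+5))"
        then obtain f where sh: "strong_hom f (Gsym (i+5)) D" and su: "f ` {..<i+5} = verts D"
          unfolding shi_le_def Gsym_def verts_def[of "({..<i+5},_)"] by auto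
        have "\<exists>s t. (s,t) \<in> arcs (Gsym (i+5)) \<and> f s = y \<and> f t = x"
          using sh su xy unfolding strong_hom_def Gsym_def verts_def[of "({..<i+5},_)"] by auto
        then obtain s t where st: "(s,t) \<in> arcs (Gsym (i+5))" "f s = y" "f t = x" by blast
        have "(t,s) \<in> arcs (Gsym (i+5))" using st(1) unfolding Gsym_def arcs_def by auto
        thus False using sh st xy unfolding strong_hom_def by auto
      qed
      thus ?thesis unfolding Av_def using Gsym_frd[of "i+5"] by auto
    qed
    show ?thesis unfolding wqo_shi_def
      apply (rule notI, elim conjE, erule notE[where P="\<exists>s. _ s"])
      apply (rule exI[of _ "\<lambda>i. Gsym (i+5)"])
      using av Gsym_anti by fastforce
  qed
qed



lemma shi_sym_card:
  assumes A: "fin_refl_digraph A" and B: "fin_refl_digraph B" and le: "shi_le A B"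
    and c: "card (verts A) = card (verts B)"
  shows "shi_le B A"
proof -
  obtain f where sh: "strong_hom f B A" and su: "f ` verts B = verts A" using le unfolding shi_le_def by auto
  have fB: "finite (verts B)" using B unfolding fin_refl_digraph_def by auto
  have inj: "inj_on f (verts B)" using su c fB by (simp add: eq_card_imp_inj_on)
  hence bij: "bij_betw f (verts B) (verts A)" using su unfolding bij_betw_def by auto
  define g where "g = inv_into (verts B) f"
  have bg: "bij_betw g (verts A) (verts B)" unfolding g_def using bij by (rule bij_betw_inv_into)
  have gf: "\<And>x. x \<in> verts B \<Longrightarrow> g (f x) = x" unfolding g_def using inj by auto
  have aB: "\<And>x y. (x,y) \<in> arcs B \<Longrightarrow> x \<in> verts B \<and> y \<in> verts B"
    using B unfolding fin_refl_digraph_def is_digraph_def by auto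
  have aA: "\<And>x y. (x,y) \<in> arcs A \<Longrightarrow> x \<in> verts A \<and> y \<in> verts A"
    using A unfolding fin_refl_digraph_def is_digraph_def by auto
  have "strong_hom g A B"
    unfolding strong_hom_def
  proof (intro conjI allI impI ballI)
    show "g ` verts A \<subseteq> verts B" using bg bij_betw_imp_surj_on by blast
  next
    fix a b assume ab: "(a,b) \<in> arcs A"
    then have "a \<in> f ` verts B" "b \<in> f ` verts B" using aA su by auto
    then obtain x y where "(x,y) \<in> arcs B" "f x = a" "f y = b" using sh ab unfolding strong_hom_def by blast
    thus "(g a, g b) \<in> arcs B" using gf aB by auto
  next
    fix u v assume "u \<in> g ` verts A" "v \<in> g ` verts A" "(u,v) \<in> arcs B"
    thus "\<exists>x y. (x, y) \<in> arcs A \<and> g x = u \<and> g y = v"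
      using sh gf aB unfolding strong_hom_def by (metis)
  qed
  moreover have "g ` verts A = verts B" using bg bij_betw_imp_surj_on by blast
  ultimately show ?thesis unfolding shi_le_def by blast
qed

lemma no_desc:
  assumes "\<forall>i. fin_refl_digraph (s i)"
    and "\<forall>i. shi_le (s (Suc i)) (s i) \<and> \<not> shi_le (s i) (s (Suc i))"
  shows False
proof -
  have lt: "card (verts (s (Suc i))) < card (verts (s i))" for i
  proof -
    have "card (verts (s (Suc i))) \<le> card (verts (s i))"
      using assms shi_card[of "s (Suc i)" "s i"] unfolding fin_refl_digraph_def by auto
    moreover have "card (verts (s (Suc i))) \<noteq> card (verts (s i))"
      using assms shi_sym_card[of "s (Suc i)" "s i"] by metis
    ultimately show ?thesis by simp
  qed
  have "card (verts (s i)) + i \<le> card (verts (s 0))" for i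
  proof (induction i)
    case (Suc i) then show ?case using lt[of i] by simp
  qed simp
  from this[of "Suc (card (verts (s 0)))"] show False by simp
qed



definition matching :: "'a digraph \<Rightarrow> ('a\<times>'a) set \<Rightarrow> bool" where
  "matching E M \<longleftrightarrow> M \<subseteq> arcs E \<and> (\<forall>p\<in>M. fst p \<noteq> snd p) \<and>
     (\<forall>p\<in>M. \<forall>q\<in>M. p \<noteq> q \<longrightarrow> {fst p, snd p} \<inter> {fst q, snd q} = {})"

lemma big_matching_hom:
  assumes E: "fin_refl_digraph E" and V: "verts D \<noteq> {}" "finite (verts D)"
    and arcsD: "arcs D = verts D \<times> verts D"
    and M: "matching E M" "finite M" and c: "card (verts D) * card (verts D) \<le> card M"
  shows "shi_le D E"
proof -
  let ?P = "verts D \<times> verts D"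
  have "card ?P \<le> card M" using c by (simp add: card_cartesian_product)
  then obtain g where g: "g ` ?P \<subseteq> M" "inj_on g ?P" using card_le_inj[of ?P M] V M(2) by auto
  obtain v0 where v0: "v0 \<in> verts D" using V by auto
  have gM: "\<And>p. p \<in> ?P \<Longrightarrow> g p \<in> M" using g by auto
  have aE: "\<And>x y. (x,y) \<in> arcs E \<Longrightarrow> x \<in> verts E \<and> y \<in> verts E"
    using E unfolding fin_refl_digraph_def is_digraph_def by auto
  have disj: "\<And>p q. p \<in> ?P \<Longrightarrow> q \<in> ?P \<Longrightarrow> p \<noteq> q \<Longrightarrow> {fst (g p), snd (g p)} \<inter> {fst (g q), snd (g q)} = {}"
  proof -
    fix p q assume pq: "p \<in> ?P" "q \<in> ?P" "p \<noteq> q"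
    hence "g p \<noteq> g q" using g(2) by (meson inj_onD)
    thus "{fst (g p), snd (g p)} \<inter> {fst (g q), snd (g q)} = {}" using M(1) gM pq unfolding matching_def by blast
  qed
  have nl: "\<And>p. p \<in> ?P \<Longrightarrow> fst (g p) \<noteq> snd (g p)" using M(1) gM unfolding matching_def by blast
  have u1: "\<And>p q. p \<in> ?P \<Longrightarrow> q \<in> ?P \<Longrightarrow> fst (g p) = fst (g q) \<Longrightarrow> p = q"
    using disj by blast
  have u2: "\<And>p q. p \<in> ?P \<Longrightarrow> q \<in> ?P \<Longrightarrow> snd (g p) = snd (g q) \<Longrightarrow> p = q"
    using disj by blast
  have u3: "\<And>p q. p \<in> ?P \<Longrightarrow> q \<in> ?P \<Longrightarrow> fst (g p) \<noteq> snd (g q)"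
    using disj nl by blast
  define f where "f x = (if \<exists>p\<in>?P. fst (g p) = x then fst (THE p. p \<in> ?P \<and> fst (g p) = x)
     else if \<exists>p\<in>?P. snd (g p) = x then snd (THE p. p \<in> ?P \<and> snd (g p) = x) else v0)" for x
  have f1: "\<And>p. p \<in> ?P \<Longrightarrow> f (fst (g p)) = fst p"
  proof -
    fix p assume p: "p \<in> ?P"
    have "(THE q. q \<in> ?P \<and> fst (g q) = fst (g p)) = p" using p u1 by (intro the_equality) auto
    thus "f (fst (g p)) = fst p" unfolding f_def using p by auto
  qed
  have f2: "\<And>p. p \<in> ?P \<Longrightarrow> f (snd (g p)) = snd p"
  proof -
    fix p assume p: "p \<in> ?P"
    have "(THE q. q \<in> ?P \<and> snd (g q) = snd (g p)) = p" using p u2 by (intro the_equality) auto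
    moreover have "\<not> (\<exists>q\<in>?P. fst (g q) = snd (g p))" using u3 p by blast
    ultimately show "f (snd (g p)) = snd p" unfolding f_def using p by auto
  qed
  have fV: "\<And>x. f x \<in> verts D"
  proof -
    fix x
    show "f x \<in> verts D"
    proof (cases "\<exists>p\<in>?P. fst (g p) = x")
      case True then obtain p where "p \<in> ?P" "fst (g p) = x" by blast
      thus ?thesis using f1 by auto
    next
      case False note F = False
      show ?thesis
      proof (cases "\<exists>p\<in>?P. snd (g p) = x")
        case True then obtain p where "p \<in> ?P" "snd (g p) = x" by blast
        thus ?thesis using f2 by auto
      next
        case False thus ?thesis using F v0 unfolding f_def by auto
      qed
    qed
  qed
  have gE: "\<And>p. p \<in> ?P \<Longrightarrow> g p \<in> arcs E" using gM M(1) unfolding matching_def by auto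
  have "strong_hom f E D"
    unfolding strong_hom_def
  proof (intro conjI allI impI ballI)
    show "f ` verts E \<subseteq> verts D" using fV by auto
  next
    fix x y show "(f x, f y) \<in> arcs D" using fV arcsD by auto
  next
    fix u v assume "u \<in> f ` verts E" "v \<in> f ` verts E" "(u, v) \<in> arcs D"
    hence p: "(u,v) \<in> ?P" using arcsD by auto
    show "\<exists>x y. (x, y) \<in> arcs E \<and> f x = u \<and> f y = v"
      using gE[OF p] f1[OF p] f2[OF p] by (metis prod.collapse fst_conv snd_conv)
  qed
  moreover have "f ` verts E = verts D"
  proof
    show "f ` verts E \<subseteq> verts D" using fV by auto
  next
    show "verts D \<subseteq> f ` verts E"
    proof
      fix u assume u: "u \<in> verts D"
      hence p: "(u,u) \<in> ?P" by auto
      have "fst (g (u,u)) \<in> verts E" using gE[OF p] aE by (metis prod.collapse)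
      thus "u \<in> f ` verts E" using f1[OF p] by (metis fst_conv image_eqI)
    qed
  qed
  ultimately show ?thesis unfolding shi_le_def by blast
qed

definition cov :: "nat digraph \<Rightarrow> nat \<Rightarrow> (nat \<Rightarrow> nat) \<Rightarrow> bool" where
  "cov E k e \<longleftrightarrow> inj_on e {..<k} \<and> e ` {..<k} \<subseteq> verts E \<and>
     (\<forall>x y. (x,y) \<in> arcs E \<and> x \<noteq> y \<longrightarrow> x \<in> e ` {..<k} \<or> y \<in> e ` {..<k})"

lemma cover_exists:
  assumes E: "fin_refl_digraph E" and V: "verts D \<noteq> {}" "finite (verts D)"
    and arcsD: "arcs D = verts D \<times> verts D" and nle: "\<not> shi_le D E"
  shows "\<exists>k e. cov E k e \<and> k \<le> 2 * (card (verts D) * card (verts D))"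
proof -
  have aE: "\<And>x y. (x,y) \<in> arcs E \<Longrightarrow> x \<in> verts E \<and> y \<in> verts E"
    using E unfolding fin_refl_digraph_def is_digraph_def by auto
  have finA: "finite (arcs E)" using E unfolding fin_refl_digraph_def is_digraph_def
    by (meson finite_SigmaI rev_finite_subset)
  have "\<exists>m. (\<exists>M. matching E M \<and> card M = m) \<and> (\<forall>m'. (\<exists>M. matching E M \<and> card M = m') \<longrightarrow> m' \<le> m)"
  proof (rule Nat.ex_has_greatest_nat[where b="card (arcs E)"])
    show "\<exists>M. matching E M \<and> card M = 0" by (rule exI[of _ "{}"]) (simp add: matching_def)
    show "\<forall>y. (\<exists>M. matching E M \<and> card M = y) \<longrightarrow> y \<le> card (arcs E)"
    proof (intro allI impI)
      fix y assume "\<exists>M. matching E M \<and> card M = y"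
      then obtain M where "M \<subseteq> arcs E" "card M = y" unfolding matching_def by blast
      thus "y \<le> card (arcs E)" using card_mono[OF finA] by blast
    qed
  qed
  then obtain M where M: "matching E M" and mx: "\<And>M'. matching E M' \<Longrightarrow> card M' \<le> card M" by blast
  have finM: "finite M" using M finA unfolding matching_def using rev_finite_subset by blast
  have cM: "card M < card (verts D) * card (verts D)"
    using big_matching_hom[OF E V arcsD M finM] nle by linarith
  define C where "C = fst ` M \<union> snd ` M"
  have finC: "finite C" unfolding C_def using finM by auto
  have cC: "card C \<le> 2 * card M" unfolding C_def
    using card_Un_le[of "fst ` M" "snd ` M"] card_image_le[OF finM, of fst] card_image_le[OF finM, of snd] by linarith
  have CV: "C \<subseteq> verts E"
  proof
    fix z assume "z \<in> C"
    then obtain p where p: "p \<in> M" "z = fst p \<or> z = snd p" unfolding C_def by blast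
    have "p \<in> arcs E" using M p unfolding matching_def by blast
    thus "z \<in> verts E" using aE p by (metis prod.collapse)
  qed
  have cover: "\<And>x y. (x,y) \<in> arcs E \<Longrightarrow> x \<noteq> y \<Longrightarrow> x \<in> C \<or> y \<in> C"
  proof (rule ccontr)
    fix x y assume a: "(x,y) \<in> arcs E" "x \<noteq> y" "\<not> (x \<in> C \<or> y \<in> C)"
    have nC: "\<And>p. p \<in> M \<Longrightarrow> x \<noteq> fst p \<and> x \<noteq> snd p \<and> y \<noteq> fst p \<and> y \<noteq> snd p"
      using a unfolding C_def by (metis UnCI image_eqI)
    have nin: "(x,y) \<notin> M" using nC by fastforce
    have Md: "\<forall>p\<in>M. \<forall>q\<in>M. p \<noteq> q \<longrightarrow> {fst p, snd p} \<inter> {fst q, snd q} = {}"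
      and Ms: "M \<subseteq> arcs E" and Ml: "\<forall>p\<in>M. fst p \<noteq> snd p" using M unfolding matching_def by auto
    have d: "\<forall>p\<in>insert (x,y) M. \<forall>q\<in>insert (x,y) M. p \<noteq> q \<longrightarrow> {fst p, snd p} \<inter> {fst q, snd q} = {}"
    proof (intro ballI impI)
      fix p q assume pq: "p \<in> insert (x,y) M" "q \<in> insert (x,y) M" "p \<noteq> q"
      show "{fst p, snd p} \<inter> {fst q, snd q} = {}"
      proof (cases "p = (x,y)")
        case True
        hence "q \<in> M" using pq by auto
        thus ?thesis using nC[of q] True by auto
      next
        case False
        hence pM: "p \<in> M" using pq by auto
        show ?thesis
        proof (cases "q = (x,y)")
          case True thus ?thesis using nC[OF pM] by auto
        next
          case False thus ?thesis using pM pq Md by auto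
        qed
      qed
    qed
    have "matching E (insert (x,y) M)" unfolding matching_def using d Ms Ml a(1,2) by auto
    hence "card (insert (x,y) M) \<le> card M" by (rule mx)
    thus False using nin finM by simp
  qed
  obtain h where h: "bij_betw h {0..<card C} C" using ex_bij_betw_nat_finite[OF finC] by auto
  have "cov E (card C) h" unfolding cov_def using h CV cover
    by (metis atLeast0LessThan bij_betw_def)
  moreover have "card C \<le> 2 * (card (verts D) * card (verts D))" using cC cM by linarith
  ultimately show ?thesis by blast
qed



definition vtyp :: "nat digraph \<Rightarrow> nat \<Rightarrow> (nat \<Rightarrow> nat) \<Rightarrow> nat \<Rightarrow> (nat \<times> bool) set" where
  "vtyp E k e x = {(j,b). j<k \<and> (if b then (x, e j) \<in> arcs E else (e j, x) \<in> arcs E)}"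
definition amat :: "nat digraph \<Rightarrow> nat \<Rightarrow> (nat \<Rightarrow> nat) \<Rightarrow> (nat \<times> nat) set" where
  "amat E k e = {(i,j). i<k \<and> j<k \<and> (e i, e j) \<in> arcs E}"
definition outs :: "nat digraph \<Rightarrow> nat \<Rightarrow> (nat \<Rightarrow> nat) \<Rightarrow> nat set" where
  "outs E k e = verts E - e ` {..<k}"
definition blk :: "nat digraph \<Rightarrow> nat \<Rightarrow> (nat \<Rightarrow> nat) \<Rightarrow> (nat \<times> bool) set \<Rightarrow> nat set" where
  "blk E k e t = {x \<in> outs E k e. vtyp E k e x = t}"
definition supp :: "nat digraph \<Rightarrow> nat \<Rightarrow> (nat \<Rightarrow> nat) \<Rightarrow> (nat \<times> bool) set set" where
  "supp E k e = vtyp E k e ` outs E k e"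

lemma surj_exists:
  assumes "finite A" "card B \<le> card A" "B \<noteq> {}" "finite B"
  shows "\<exists>h. h ` A = B"
proof -
  obtain g where g: "g ` B \<subseteq> A" "inj_on g B" using card_le_inj[of B A] assms by auto
  obtain b0 where b0: "b0 \<in> B" using assms by auto
  define h where "h a = (if a \<in> g ` B then inv_into B g a else b0)" for a
  have "h ` A = B"
  proof
    show "h ` A \<subseteq> B" unfolding h_def using b0 by (auto simp: inv_into_into)
    show "B \<subseteq> h ` A"
    proof
      fix b assume b: "b \<in> B"
      hence "h (g b) = b" unfolding h_def using g by auto
      thus "b \<in> h ` A" using g b by (metis image_eqI image_subset_iff)
    qed
  qed
  thus ?thesis by blast
qed

lemma compare:
  assumes E: "fin_refl_digraph E" and E': "fin_refl_digraph E'"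
    and c: "cov E k e" and c': "cov E' k e'"
    and am: "amat E k e = amat E' k e'" and sp: "supp E k e = supp E' k e'"
    and ct: "\<forall>t\<in>supp E k e. card (blk E k e t) \<le> card (blk E' k e' t)"
  shows "shi_le E E'"
proof -
  have finE: "finite (verts E)" and finE': "finite (verts E')"
    using E E' unfolding fin_refl_digraph_def by auto
  have aE: "\<And>x y. (x,y) \<in> arcs E \<Longrightarrow> x \<in> verts E \<and> y \<in> verts E"
    using E unfolding fin_refl_digraph_def is_digraph_def by auto
  have aE': "\<And>x y. (x,y) \<in> arcs E' \<Longrightarrow> x \<in> verts E' \<and> y \<in> verts E'"
    using E' unfolding fin_refl_digraph_def is_digraph_def by auto
  have rE: "\<And>x. x \<in> verts E \<Longrightarrow> (x,x) \<in> arcs E" using E unfolding fin_refl_digraph_def by auto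
  have rE': "\<And>x. x \<in> verts E' \<Longrightarrow> (x,x) \<in> arcs E'" using E' unfolding fin_refl_digraph_def by auto
  have ie: "inj_on e {..<k}" and eV: "e ` {..<k} \<subseteq> verts E"
    and cvE: "\<And>x y. (x,y) \<in> arcs E \<Longrightarrow> x \<noteq> y \<Longrightarrow> x \<in> e ` {..<k} \<or> y \<in> e ` {..<k}"
    using c unfolding cov_def by auto
  have ie': "inj_on e' {..<k}" and eV': "e' ` {..<k} \<subseteq> verts E'"
    and cvE': "\<And>x y. (x,y) \<in> arcs E' \<Longrightarrow> x \<noteq> y \<Longrightarrow> x \<in> e' ` {..<k} \<or> y \<in> e' ` {..<k}"
    using c' unfolding cov_def by auto
  have "\<forall>t\<in>supp E k e. \<exists>h. h ` blk E' k e' t = blk E k e t"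
  proof
    fix t assume t: "t \<in> supp E k e"
    have "blk E k e t \<noteq> {}" using t unfolding supp_def blk_def by auto
    moreover have "finite (blk E k e t)" "finite (blk E' k e' t)"
      unfolding blk_def outs_def using finE finE' by auto
    ultimately show "\<exists>h. h ` blk E' k e' t = blk E k e t" using surj_exists ct t by blast
  qed
  then obtain H where H: "\<And>t. t \<in> supp E k e \<Longrightarrow> H t ` blk E' k e' t = blk E k e t" by metis
  define f where "f x = (if x \<in> e' ` {..<k} then e (inv_into {..<k} e' x) else H (vtyp E' k e' x) x)" for x
  have fC: "\<And>j. j < k \<Longrightarrow> f (e' j) = e j" unfolding f_def using ie' by auto
  have fO: "\<And>x. x \<in> outs E' k e' \<Longrightarrow> f x \<in> outs E k e \<and> vtyp E k e (f x) = vtyp E' k e' x"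
  proof -
    fix x assume x: "x \<in> outs E' k e'"
    let ?t = "vtyp E' k e' x"
    have t: "?t \<in> supp E k e" using sp x unfolding supp_def by auto
    have "x \<in> blk E' k e' ?t" using x unfolding blk_def by auto
    hence "H ?t x \<in> blk E k e ?t" using H[OF t] by auto
    moreover have "f x = H ?t x" using x unfolding f_def outs_def by auto
    ultimately show "f x \<in> outs E k e \<and> vtyp E k e (f x) = vtyp E' k e' x" unfolding blk_def by auto
  qed
  have vtypI: "\<And>E k e x j b. j < k \<Longrightarrow> (j,b) \<in> vtyp E k e x \<longleftrightarrow> (if b then (x, e j) \<in> arcs E else (e j, x) \<in> arcs E)"
    unfolding vtyp_def by auto
  have outsI: "\<And>E k e x. x \<in> verts E \<Longrightarrow> x \<notin> e ` {..<k} \<Longrightarrow> x \<in> outs E k e" unfolding outs_def by auto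
  have hom: "(f x, f y) \<in> arcs E" if xy: "(x,y) \<in> arcs E'" for x y
  proof (cases "x \<in> e' ` {..<k}")
    case True
    then obtain i where i: "i < k" "x = e' i" by auto
    show ?thesis
    proof (cases "y \<in> e' ` {..<k}")
      case True
      then obtain j where j: "j < k" "y = e' j" by auto
      have "(i,j) \<in> amat E' k e'" unfolding amat_def using i j xy by auto
      hence "(i,j) \<in> amat E k e" using am by simp
      thus ?thesis using i j fC unfolding amat_def by auto
    next
      case False
      hence yo: "y \<in> outs E' k e'" using outsI aE' xy by blast
      have "(i,False) \<in> vtyp E' k e' y" using vtypI[of i k False E' e' y] i xy by auto
      hence "(i,False) \<in> vtyp E k e (f y)" using fO[OF yo] by simp
      hence "(e i, f y) \<in> arcs E" using vtypI[of i k False E e "f y"] i by auto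
      thus ?thesis using fC i by auto
    qed
  next
    case False
    hence xo: "x \<in> outs E' k e'" using outsI aE' xy by blast
    show ?thesis
    proof (cases "y \<in> e' ` {..<k}")
      case True
      then obtain j where j: "j < k" "y = e' j" by auto
      have "(j,True) \<in> vtyp E' k e' x" using vtypI[of j k True E' e' x] j xy by auto
      hence "(j,True) \<in> vtyp E k e (f x)" using fO[OF xo] by simp
      hence "(f x, e j) \<in> arcs E" using vtypI[of j k True E e "f x"] j by auto
      thus ?thesis using fC j by auto
    next
      case F2: False
      hence "x = y" using cvE' xy False by blast
      thus ?thesis using rE fO[OF xo] unfolding outs_def by auto
    qed
  qed
  have fV: "f ` verts E' \<subseteq> verts E"
  proof
    fix z assume "z \<in> f ` verts E'"
    then obtain x where x: "x \<in> verts E'" "z = f x" by auto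
    show "z \<in> verts E"
    proof (cases "x \<in> e' ` {..<k}")
      case True thus ?thesis using x fC eV by auto
    next
      case False thus ?thesis using x fO outsI unfolding outs_def by blast
    qed
  qed
  have pre_out: "\<exists>y. y \<in> outs E' k e' \<and> f y = v \<and> vtyp E' k e' y = vtyp E k e v" if v: "v \<in> outs E k e" for v
  proof -
    let ?t = "vtyp E k e v"
    have t: "?t \<in> supp E k e" using v unfolding supp_def by auto
    have "v \<in> blk E k e ?t" using v unfolding blk_def by auto
    then obtain y where y: "y \<in> blk E' k e' ?t" "H ?t y = v" using H[OF t] by (metis imageE)
    have "f y = H (vtyp E' k e' y) y" using y(1) unfolding f_def blk_def outs_def by auto
    thus ?thesis using y unfolding blk_def by auto
  qed
  have surj: "f ` verts E' = verts E"
  proof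
    show "f ` verts E' \<subseteq> verts E" by (rule fV)
    show "verts E \<subseteq> f ` verts E'"
    proof
      fix v assume v: "v \<in> verts E"
      show "v \<in> f ` verts E'"
      proof (cases "v \<in> e ` {..<k}")
        case True
        then obtain j where "j < k" "v = e j" by auto
        thus ?thesis using fC eV' by (metis image_eqI image_subset_iff lessThan_iff)
      next
        case False
        then obtain y where "y \<in> outs E' k e'" "f y = v" using pre_out outsI v by blast
        thus ?thesis unfolding outs_def by auto
      qed
    qed
  qed
  have img: "\<exists>x y. (x,y) \<in> arcs E' \<and> f x = u \<and> f y = v" if uv: "(u,v) \<in> arcs E" for u v
  proof (cases "u \<in> e ` {..<k}")
    case True
    then obtain i where i: "i < k" "u = e i" by auto
    show ?thesis
    proof (cases "v \<in> e ` {..<k}")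
      case True
      then obtain j where j: "j < k" "v = e j" by auto
      have "(i,j) \<in> amat E k e" unfolding amat_def using i j uv by auto
      hence "(e' i, e' j) \<in> arcs E'" using am unfolding amat_def by auto
      thus ?thesis using fC i j by auto
    next
      case False
      hence vo: "v \<in> outs E k e" using outsI aE uv by blast
      obtain y where y: "y \<in> outs E' k e'" "f y = v" "vtyp E' k e' y = vtyp E k e v" using pre_out[OF vo] by blast
      have "(i,False) \<in> vtyp E k e v" using vtypI[of i k False E e v] i uv by auto
      hence "(e' i, y) \<in> arcs E'" using y vtypI[of i k False E' e' y] i by auto
      thus ?thesis using fC i y by auto
    qed
  next
    case False
    hence uo: "u \<in> outs E k e" using outsI aE uv by blast
    obtain x where x: "x \<in> outs E' k e'" "f x = u" "vtyp E' k e' x = vtyp E k e u" using pre_out[OF uo] by blast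
    show ?thesis
    proof (cases "v \<in> e ` {..<k}")
      case True
      then obtain j where j: "j < k" "v = e j" by auto
      have "(j,True) \<in> vtyp E k e u" using vtypI[of j k True E e u] j uv by auto
      hence "(x, e' j) \<in> arcs E'" using x vtypI[of j k True E' e' x] j by auto
      thus ?thesis using fC j x by auto
    next
      case F2: False
      hence "u = v" using cvE uv False by blast
      moreover have "(x,x) \<in> arcs E'" using rE' x(1) unfolding outs_def by auto
      ultimately show ?thesis using x by auto
    qed
  qed
  have "strong_hom f E' E" unfolding strong_hom_def using fV hom img by blast
  thus ?thesis unfolding shi_le_def using surj by blast
qed



lemma nat_mono_sub:
  fixes w :: "nat \<Rightarrow> nat"
  shows "\<exists>h::nat\<Rightarrow>nat. strict_mono h \<and> (\<forall>m n. m \<le> n \<longrightarrow> w (h m) \<le> w (h n))"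
proof -
  obtain f where f: "strict_mono f" "monoseq (\<lambda>n. w (f n))" using seq_monosub[of w] by blast
  show ?thesis
  proof (cases "\<forall>m n. m \<le> n \<longrightarrow> w (f m) \<le> w (f n)")
    case True show ?thesis by (rule exI[of _ f]) (use f(1) True in simp)
  next
    case False
    hence dec: "\<forall>m n. m \<le> n \<longrightarrow> w (f n) \<le> w (f m)" using f(2) unfolding monoseq_def by blast
    define m where "m = (LEAST x. \<exists>n. w (f n) = x)"
    have "\<exists>n. w (f n) = m" unfolding m_def by (rule LeastI_ex) blast
    then obtain N where N: "w (f N) = m" by blast
    have lo: "\<And>n. m \<le> w (f n)" unfolding m_def by (rule Least_le) blast
    have eq: "w (f (n + N)) = m" for n
    proof -
      have "w (f (n + N)) \<le> w (f N)" using dec by simp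
      thus ?thesis using lo[of "n+N"] N by linarith
    qed
    have sm: "strict_mono (\<lambda>n. f (n + N))" using f(1) unfolding strict_mono_def by simp
    show ?thesis by (rule exI[of _ "\<lambda>n. f (n + N)"]) (use sm eq in simp)
  qed
qed

lemma dickson_sub:
  fixes T :: "'b set" and v :: "nat \<Rightarrow> 'b \<Rightarrow> nat"
  assumes "finite T"
  shows "\<exists>h::nat\<Rightarrow>nat. strict_mono h \<and> (\<forall>t\<in>T. \<forall>m n. m \<le> n \<longrightarrow> v (h m) t \<le> v (h n) t)"
  using assms
proof (induction T rule: finite_induct)
  case empty
  show ?case by (rule exI[of _ id]) (simp add: strict_mono_def)
next
  case (insert t0 T)
  from insert.IH obtain h :: "nat \<Rightarrow> nat" where h: "strict_mono h" "\<forall>t\<in>T. \<forall>m n. m \<le> n \<longrightarrow> v (h m) t \<le> v (h n) t"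
    by (elim exE conjE)
  from nat_mono_sub[of "\<lambda>n. v (h n) t0"] obtain g :: "nat \<Rightarrow> nat" where
    g: "strict_mono g" "\<forall>m n. m \<le> n \<longrightarrow> v (h (g m)) t0 \<le> v (h (g n)) t0"
    by (elim exE conjE)
  have "strict_mono (h \<circ> g)" using h(1) g(1) by (simp add: strict_mono_def)
  moreover have "\<forall>t\<in>insert t0 T. \<forall>m n. m \<le> n \<longrightarrow> v ((h \<circ> g) m) t \<le> v ((h \<circ> g) n) t"
  proof (intro ballI allI impI)
    fix t m n assume t: "t \<in> insert t0 T" and mn: "(m::nat) \<le> n"
    have gmn: "g m \<le> g n" using mn strict_mono_less_eq[OF g(1)] by blast
    show "v ((h \<circ> g) m) t \<le> v ((h \<circ> g) n) t"
    proof (cases "t = t0")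
      case True thus ?thesis using g(2) mn by simp
    next
      case False hence "t \<in> T" using t by simp
      thus ?thesis using h(2) gmn by simp
    qed
  qed
  ultimately show ?case by (intro exI[of _ "h \<circ> g"] conjI)
qed

lemma dickson:
  fixes T :: "'b set" and v :: "nat \<Rightarrow> 'b \<Rightarrow> nat"
  assumes "finite T"
  shows "\<exists>i j. i < j \<and> (\<forall>t\<in>T. v i t \<le> v j t)"
proof -
  from dickson_sub[OF assms, of v] obtain h :: "nat \<Rightarrow> nat" where h: "strict_mono h" "\<forall>t\<in>T. \<forall>m n. m \<le> n \<longrightarrow> v (h m) t \<le> v (h n) t"
    by (elim exE conjE)
  have "h 0 < h 1" using h(1) unfolding strict_mono_def by simp
  moreover have "\<forall>t\<in>T. v (h 0) t \<le> v (h 1) t" using h(2) by simp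
  ultimately show ?thesis by (intro exI[of _ "h 0"] exI[of _ "h 1"] conjI)
qed



lemma wqo_if:
  assumes D: "fin_refl_digraph D" and V: "verts D \<noteq> {}" "finite (verts D)"
    and arcsD: "arcs D = verts D \<times> verts D"
  shows "wqo_shi (Av D)"
  unfolding wqo_shi_def
proof (intro conjI notI)
  assume "\<exists>s::nat\<Rightarrow>nat digraph. (\<forall>i. s i \<in> Av D) \<and> (\<forall>i. shi_le (s (Suc i)) (s i) \<and> \<not> shi_le (s i) (s (Suc i)))"
  then obtain s :: "nat \<Rightarrow> nat digraph" where s1: "\<forall>i. s i \<in> Av D"
     and s2: "\<forall>i. shi_le (s (Suc i)) (s i) \<and> \<not> shi_le (s i) (s (Suc i))" by blast
  have "\<forall>i. fin_refl_digraph (s i)" using s1 unfolding Av_def by blast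
  from no_desc[OF this s2] show False .
next
  assume "\<exists>s::nat\<Rightarrow>nat digraph. (\<forall>i. s i \<in> Av D) \<and> (\<forall>i j. i \<noteq> j \<longrightarrow> \<not> shi_le (s i) (s j))"
  then obtain s :: "nat \<Rightarrow> nat digraph" where s0: "\<forall>i. s i \<in> Av D" and anti0: "\<forall>i j. i \<noteq> j \<longrightarrow> \<not> shi_le (s i) (s j)" by metis
  have s: "\<And>i. s i \<in> Av D" using s0 by (rule spec)
  have anti: "\<And>i j. i \<noteq> j \<Longrightarrow> \<not> shi_le (s i) (s j)" using anti0 by simp
  define L where "L = 2 * (card (verts D) * card (verts D))"
  have frd: "\<And>i. fin_refl_digraph (s i)" using s by (simp add: Av_def)
  have "\<forall>i. \<exists>k e. cov (s i) k e \<and> k \<le> L"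
  proof
    fix i
    have "fin_refl_digraph (s i)" "\<not> shi_le D (s i)" using s[of i] by (simp_all add: Av_def)
    thus "\<exists>k e. cov (s i) k e \<and> k \<le> L" unfolding L_def by (rule cover_exists[OF _ V arcsD])
  qed
  hence "\<forall>i. \<exists>p. cov (s i) (fst p) (snd p) \<and> fst p \<le> L" by simp
  from choice[OF this] obtain P where P: "\<forall>i. cov (s i) (fst (P i)) (snd (P i)) \<and> fst (P i) \<le> L"
    by (elim exE)
  define K where "K i = fst (P i)" for i
  define Ef where "Ef i = snd (P i)" for i
  have KE: "\<And>i. cov (s i) (K i) (Ef i)" "\<And>i. K i \<le> L" using P unfolding K_def Ef_def by auto
  define key where "key i = (K i, amat (s i) (K i) (Ef i), supp (s i) (K i) (Ef i))" for i
  define KS where "KS = {..L} \<times> Pow ({..L} \<times> {..L}) \<times> Pow (Pow ({..L} \<times> (UNIV :: bool set)))"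
  have finKS: "finite KS" unfolding KS_def by (intro finite_cartesian_product finite_Pow_iff[THEN iffD2] finite_atMost finite)
  have keyKS: "key i \<in> KS" for i
  proof -
    have "amat (s i) (K i) (Ef i) \<subseteq> {..L} \<times> {..L}" using KE(2)[of i] unfolding amat_def by auto
    moreover have "supp (s i) (K i) (Ef i) \<subseteq> Pow ({..L} \<times> (UNIV :: bool set))"
      using KE(2)[of i] unfolding supp_def vtyp_def by auto
    ultimately show ?thesis unfolding key_def KS_def using KE(2)[of i] by auto
  qed
  have "key ` UNIV \<subseteq> KS" using keyKS by blast
  hence "finite (key ` UNIV)" using finKS by (rule finite_subset)
  from pigeonhole_infinite[OF infinite_UNIV_nat this] obtain a0 where a0: "infinite {a. key a = key a0}"
    by auto
  define I where "I = {a. key a = key a0}"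
  have infI: "infinite I" using a0 unfolding I_def by simp
  define g where "g = enumerate I"
  define T where "T = Pow ({..L} \<times> (UNIV :: bool set))"
  have finT: "finite T" unfolding T_def by (intro finite_cartesian_product finite_Pow_iff[THEN iffD2] finite_atMost finite)
  obtain i j where ij: "i < j" and le: "\<forall>t\<in>T. card (blk (s (g i)) (K (g i)) (Ef (g i)) t)
      \<le> card (blk (s (g j)) (K (g j)) (Ef (g j)) t)"
    using dickson[OF finT, of "\<lambda>n t. card (blk (s (g n)) (K (g n)) (Ef (g n)) t)"] by (elim exE conjE) simp
  have gij: "g i < g j" unfolding g_def using enumerate_mono[OF ij infI] .
  have "g i \<in> I" "g j \<in> I" unfolding g_def by (rule enumerate_in_set[OF infI])+
  hence kk: "key (g i) = key (g j)" unfolding I_def by simp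
  hence k1: "K (g i) = K (g j)" and k2: "amat (s (g i)) (K (g i)) (Ef (g i)) = amat (s (g j)) (K (g j)) (Ef (g j))"
    and k3: "supp (s (g i)) (K (g i)) (Ef (g i)) = supp (s (g j)) (K (g j)) (Ef (g j))"
    unfolding key_def prod.inject by blast+
  have suppT: "supp (s (g i)) (K (g i)) (Ef (g i)) \<subseteq> T"
    using KE(2)[of "g i"] unfolding supp_def vtyp_def T_def by auto
  have c2: "cov (s (g j)) (K (g i)) (Ef (g j))" using KE(1)[of "g j"] k1 by simp
  have k2': "amat (s (g i)) (K (g i)) (Ef (g i)) = amat (s (g j)) (K (g i)) (Ef (g j))" using k2 k1 by simp
  have k3': "supp (s (g i)) (K (g i)) (Ef (g i)) = supp (s (g j)) (K (g i)) (Ef (g j))" using k3 k1 by simp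
  have le': "\<forall>t\<in>supp (s (g i)) (K (g i)) (Ef (g i)). card (blk (s (g i)) (K (g i)) (Ef (g i)) t)
      \<le> card (blk (s (g j)) (K (g i)) (Ef (g j)) t)" using le suppT k1 by auto
  have "shi_le (s (g i)) (s (g j))"
    by (rule compare[OF frd frd KE(1) c2 k2' k3' le'])
  thus False using anti gij by simp
qed



theorem theorem4p7:
  fixes D :: "'a digraph"
  assumes "fin_refl_digraph D"
  shows "wqo_shi (Av D) \<longleftrightarrow> (\<exists>n\<ge>1. digraph_iso D (complete_digraph n))"
proof
  assume "wqo_shi (Av D)"
  thus "\<exists>n\<ge>1. digraph_iso D (complete_digraph n)" using not_wqo[OF assms] by blast
next
  assume "\<exists>n\<ge>1. digraph_iso D (complete_digraph n)"
  then obtain n f where n: "n \<ge> 1" and b0: "bij_betw f (verts D) (verts (complete_digraph n))"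
    and ar0: "\<forall>x\<in>verts D. \<forall>y\<in>verts D. (x, y) \<in> arcs D \<longleftrightarrow> (f x, f y) \<in> arcs (complete_digraph n)"
    unfolding digraph_iso_def by blast
  have vc: "verts (complete_digraph n) = {1..n}" and ac: "arcs (complete_digraph n) = {1..n} \<times> {1..n}"
    by (simp_all add: complete_digraph_def verts_def arcs_def)
  have b: "bij_betw f (verts D) {1..n}" using b0 vc by simp
  have ar: "\<forall>x\<in>verts D. \<forall>y\<in>verts D. (x, y) \<in> arcs D \<longleftrightarrow> (f x, f y) \<in> {1..n} \<times> {1..n}"
    using ar0 ac by simp
  have fin: "finite (verts D)" using assms unfolding fin_refl_digraph_def by auto
  have "1 \<in> f ` verts D" using b n unfolding bij_betw_def by auto
  hence ne: "verts D \<noteq> {}" by auto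
  have "arcs D = verts D \<times> verts D"
  proof
    show "arcs D \<subseteq> verts D \<times> verts D" using assms unfolding fin_refl_digraph_def is_digraph_def by auto
    show "verts D \<times> verts D \<subseteq> arcs D"
    proof (clarify)
      fix x y assume xy: "x \<in> verts D" "y \<in> verts D"
      hence "f x \<in> {1..n}" "f y \<in> {1..n}" using b unfolding bij_betw_def by auto
      thus "(x,y) \<in> arcs D" using ar xy by blast
    qed
  qed
  thus "wqo_shi (Av D)" using wqo_if[OF assms ne fin] by blast
qed

end
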